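(* If $\sigma^2<\infty$, then \[\lim_{m\to\infty}\mathbf{P}(N(m)=1\mid N(m)\ge1)=1.\]
   Context: $\xi$ is a random variable on $\{0,1,2,\dots\}$ with $\mathbf{P}(\xi=k)=p_k$, mean $\mu\in(0,1)$ and variance $\sigma^2>0$; $\xi^*$ has the size-biased law $\mathbf{P}(\xi^*=k)=kp_k/\mu$, $k\ge1$. For a rooted tree $T$, $\mathcal{H}(T)$ is its height. Let $(\mathcal{T}_j)_{j\ge1}$ be independent Galton–Watson trees with offspring law $\xi$, independent of $\xi^*$, and $N(m)=\sum_{j=1}^{\xi^*-1}\mathbf{1}_{\{\mathcal{H}(\mathcal{T}_j)\ge m\}}$. *)

theory Defs
  imports "HOL-Probability.Probability"
begin

datatype ptree = PNode "ptree list"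

fun height :: "ptree \<Rightarrow> nat" where
  "height (PNode ts) = (if ts = [] then 0 else Suc (fold max (map height ts) 0))"

definition offspring_mean :: "nat pmf \<Rightarrow> real" where
  "offspring_mean \<xi> = measure_pmf.expectation \<xi> real"

definition size_biased :: "nat pmf \<Rightarrow> nat pmf" where
  "size_biased \<xi> = embed_pmf (\<lambda>k. real k * pmf \<xi> k / offspring_mean \<xi>)"

fun gw_trunc :: "nat pmf \<Rightarrow> nat \<Rightarrow> ptree pmf" where
  "gw_trunc \<xi> 0 = return_pmf (PNode [])"
| "gw_trunc \<xi> (Suc n) =
     bind_pmf \<xi> (\<lambda>k. map_pmf PNode (replicate_pmf k (gw_trunc \<xi> n)))"

text \<open>Law of N(m) = #{ j \<le> xi* - 1 : H(T_j) \<ge> m }, with T_j iid GW trees independent of xi*.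
  The event H(T) \<ge> m only depends on generations 0..m, so the truncation at depth m
  is used.\<close>
definition N_law :: "nat pmf \<Rightarrow> nat \<Rightarrow> nat pmf" where
  "N_law \<xi> m =
     bind_pmf (size_biased \<xi>) (\<lambda>k.
       map_pmf (\<lambda>ts. length (filter (\<lambda>t. height t \<ge> m) ts))
         (replicate_pmf (k - 1) (gw_trunc \<xi> m)))"

end

theory Submission imports Defs begin


lemma offspring_integrable:
  assumes "0 < offspring_mean \<xi>"
  shows "integrable (measure_pmf \<xi>) real"
  using assms unfolding offspring_mean_def
  by (metis less_irrefl not_integrable_integral_eq)

lemma pmf_size_biased:
  assumes mu: "0 < offspring_mean \<xi>"
  shows "pmf (size_biased \<xi>) k = real k * pmf \<xi> k / offspring_mean \<xi>"
proof -
  let ?mu = "offspring_mean \<xi>"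
  have int: "integrable (measure_pmf \<xi>) real" by (rule offspring_integrable[OF mu])
  have "(\<integral>\<^sup>+ k. ennreal (real k * pmf \<xi> k / ?mu) \<partial>count_space UNIV)
      = (\<integral>\<^sup>+ k. ennreal (pmf \<xi> k) * ennreal (real k / ?mu) \<partial>count_space UNIV)"
    using mu by (intro nn_integral_cong) (simp add: ennreal_mult'[symmetric] field_simps)
  also have "\<dots> = (\<integral>\<^sup>+ k. ennreal (real k / ?mu) \<partial>measure_pmf \<xi>)"
    by (simp add: nn_integral_measure_pmf)
  also have "\<dots> = ennreal (\<integral> k. real k / ?mu \<partial>measure_pmf \<xi>)"
    using mu int by (intro nn_integral_eq_integral) auto
  also have "(\<integral> k. real k / ?mu \<partial>measure_pmf \<xi>) = 1"
    using mu by (simp add: offspring_mean_def[symmetric])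
  finally have prob: "(\<integral>\<^sup>+ k. ennreal (real k * pmf \<xi> k / ?mu) \<partial>count_space UNIV) = 1"
    by simp
  show ?thesis unfolding size_biased_def
    by (rule pmf_embed_pmf) (use mu prob in auto)
qed

lemma size_biased_density:
  assumes mu: "0 < offspring_mean \<xi>"
  shows "measure_pmf (size_biased \<xi>) = density (measure_pmf \<xi>) (\<lambda>k. real k / offspring_mean \<xi>)"
proof -
  have "measure_pmf (size_biased \<xi>) = density (count_space UNIV) (\<lambda>k. ennreal (pmf \<xi> k) * ennreal (real k / offspring_mean \<xi>))"
    unfolding measure_pmf_eq_density
    by (intro density_cong) (use mu in \<open>auto simp: pmf_size_biased ennreal_mult'[symmetric]\<close>)
  also have "\<dots> = density (measure_pmf \<xi>) (\<lambda>k. real k / offspring_mean \<xi>)"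
    unfolding measure_pmf_eq_density by (rule density_density_eq[symmetric]) auto
  finally show ?thesis .
qed

lemma integral_size_biased:
  fixes f :: "nat \<Rightarrow> real"
  assumes mu: "0 < offspring_mean \<xi>"
  shows "(\<integral>k. f k \<partial>measure_pmf (size_biased \<xi>)) = (\<integral>k. real k / offspring_mean \<xi> * f k \<partial>measure_pmf \<xi>)"
  unfolding size_biased_density[OF mu]
  by (subst integral_density) (use mu in auto)

lemma integrable_size_biased:
  fixes f :: "nat \<Rightarrow> real"
  assumes mu: "0 < offspring_mean \<xi>"
  shows "integrable (measure_pmf (size_biased \<xi>)) f \<longleftrightarrow> integrable (measure_pmf \<xi>) (\<lambda>k. real k / offspring_mean \<xi> * f k)"
  unfolding size_biased_density[OF mu]
  by (subst integrable_density) (use mu in auto)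




lemma replicate_pmf_map: "replicate_pmf n (map_pmf f p) = map_pmf (map f) (replicate_pmf n p)"
  by (induction n) (simp_all add: map_pmf_def bind_assoc_pmf bind_return_pmf)

lemma bool_pmf_bernoulli: "(p :: bool pmf) = bernoulli_pmf (pmf p True)"
proof (rule pmf_eqI)
  fix b show "pmf p b = pmf (bernoulli_pmf (pmf p True)) b"
    by (cases b) (simp_all add: pmf_False_conv_True pmf_le_1)
qed

lemma count_binomial:
  "map_pmf (\<lambda>ts. length (filter P ts)) (replicate_pmf n p) = binomial_pmf n (pmf (map_pmf P p) True)"
proof -
  let ?q = "pmf (map_pmf P p) True"
  have q: "?q \<in> {0..1}" by (simp add: pmf_le_1)
  have "binomial_pmf n ?q = map_pmf (length \<circ> filter id) (replicate_pmf n (map_pmf P p))"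
    by (subst bool_pmf_bernoulli[of "map_pmf P p"]) (rule binomial_pmf_altdef[OF q])
  also have "\<dots> = map_pmf (\<lambda>ts. length (filter P ts)) (replicate_pmf n p)"
    by (simp add: replicate_pmf_map map_pmf_comp filter_map o_def)
  finally show ?thesis by simp
qed

lemma fold_max_ge: "(m::nat) \<le> fold max xs a \<longleftrightarrow> m \<le> a \<or> (\<exists>x\<in>set xs. m \<le> x)"
  by (induction xs arbitrary: a) auto

lemma height_Suc_ge: "Suc m \<le> height (PNode ts) \<longleftrightarrow> (\<exists>t\<in>set ts. m \<le> height t)"
  by (auto simp: fold_max_ge neq_Nil_conv)

definition gwq :: "nat pmf \<Rightarrow> nat \<Rightarrow> real" where
  "gwq \<xi> m = pmf (map_pmf (\<lambda>t. m \<le> height t) (gw_trunc \<xi> m)) True"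

lemma gwq_0: "gwq \<xi> 0 = 1"
  by (simp add: gwq_def)

lemma gwq_range: "0 \<le> gwq \<xi> m" "gwq \<xi> m \<le> 1"
  by (simp_all add: gwq_def pmf_le_1)

lemma gwq_Suc: "gwq \<xi> (Suc m) = (\<integral>k. 1 - (1 - gwq \<xi> m) ^ k \<partial>measure_pmf \<xi>)"
proof -
  let ?G = "gw_trunc \<xi> m"
  let ?c = "\<lambda>ts. length (filter (\<lambda>t. m \<le> height t) ts)"
  have eq: "map_pmf (\<lambda>t. Suc m \<le> height t) (map_pmf PNode (replicate_pmf k ?G))
        = map_pmf (\<lambda>n. 0 < n) (map_pmf ?c (replicate_pmf k ?G))" for k
    unfolding map_pmf_comp
    by (intro map_pmf_cong refl) (simp add: height_Suc_ge filter_empty_conv del: height.simps)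
  have "pmf (map_pmf (\<lambda>n. 0 < n) (binomial_pmf k (gwq \<xi> m))) True = 1 - (1 - gwq \<xi> m) ^ k" for k
  proof -
    have "pmf (map_pmf (\<lambda>n. 0 < n) (binomial_pmf k (gwq \<xi> m))) True
        = 1 - pmf (map_pmf (\<lambda>n. 0 < n) (binomial_pmf k (gwq \<xi> m))) False"
      by (simp add: pmf_False_conv_True)
    also have "pmf (map_pmf (\<lambda>n. 0 < n) (binomial_pmf k (gwq \<xi> m))) False = pmf (binomial_pmf k (gwq \<xi> m)) 0"
      by (simp add: pmf_map measure_pmf_single[symmetric] vimage_def)
    finally show ?thesis using gwq_range[of \<xi> m] by simp
  qed
  then show ?thesis
    unfolding gwq_def[of \<xi> "Suc m"]
    by (simp add: map_bind_pmf pmf_bind eq count_binomial gwq_def[symmetric] del: height.simps)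
qed




lemma integral_pmf_pos:
  fixes f :: "'a \<Rightarrow> real"
  assumes "\<And>x. 0 \<le> f x" "integrable (measure_pmf p) f" "x \<in> set_pmf p" "0 < f x"
  shows "0 < (\<integral>y. f y \<partial>measure_pmf p)"
proof -
  have ge: "0 \<le> (\<integral>y. f y \<partial>measure_pmf p)" using assms(1) by (simp add: integral_nonneg)
  have "(\<integral>y. f y \<partial>measure_pmf p) \<noteq> 0"
    using assms by (subst integral_nonneg_eq_0_iff_AE) (auto simp: AE_measure_pmf_iff intro!: bexI[of _ x])
  with ge show ?thesis by simp
qed

lemma bounded_pmf_integrable:
  fixes f :: "'a \<Rightarrow> real"
  assumes "\<And>x. \<bar>f x\<bar> \<le> B"
  shows "integrable (measure_pmf p) f"
  by (rule measure_pmf.integrable_const_bound[where B=B]) (use assms in auto)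

lemma one_minus_pow_bound:
  fixes q :: real assumes "0 \<le> q" "q \<le> 1"
  shows "0 \<le> 1 - (1 - q) ^ k" "1 - (1 - q) ^ k \<le> real k * q" "\<bar>1 - (1 - q) ^ k\<bar> \<le> 1"
proof -
  have a: "(1 - q) ^ k \<le> 1" "0 \<le> (1 - q) ^ k" using assms by (auto intro: power_le_one)
  then show "0 \<le> 1 - (1 - q) ^ k" "\<bar>1 - (1 - q) ^ k\<bar> \<le> 1" by auto
  have "1 + real k * (- q) \<le> (1 + (- q)) ^ k" using assms by (intro Bernoulli_inequality) auto
  then show "1 - (1 - q) ^ k \<le> real k * q" by simp
qed

context
  fixes \<xi> :: "nat pmf"
  assumes mean_pos: "0 < offspring_mean \<xi>"
    and mean_lt1: "offspring_mean \<xi> < 1"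
    and nondeg: "measure_pmf.prob \<xi> {k. k \<ge> 2} > 0"
begin

lemma exists_big: "\<exists>k\<in>set_pmf \<xi>. 2 \<le> k"
proof (rule ccontr)
  assume "\<not> ?thesis"
  then have "measure_pmf.prob \<xi> {k. k \<ge> 2} = 0"
    by (subst measure_pmf_zero_iff) auto
  with nondeg show False by simp
qed

lemma gwq_Suc_le: "gwq \<xi> (Suc m) \<le> offspring_mean \<xi> * gwq \<xi> m"
proof -
  have int: "integrable (measure_pmf \<xi>) real" by (rule offspring_integrable[OF mean_pos])
  have "gwq \<xi> (Suc m) \<le> (\<integral>k. real k * gwq \<xi> m \<partial>measure_pmf \<xi>)"
    unfolding gwq_Suc
    by (rule integral_mono)
       (use int gwq_range[of \<xi> m] one_minus_pow_bound in \<open>auto intro!: bounded_pmf_integrable[where B=1]\<close>)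
  also have "\<dots> = offspring_mean \<xi> * gwq \<xi> m"
    by (simp add: offspring_mean_def)
  finally show ?thesis .
qed

lemma gwq_le_pow: "gwq \<xi> m \<le> offspring_mean \<xi> ^ m"
proof (induction m)
  case 0 then show ?case by (simp add: gwq_0)
next
  case (Suc m)
  have "gwq \<xi> (Suc m) \<le> offspring_mean \<xi> * gwq \<xi> m" by (rule gwq_Suc_le)
  also have "\<dots> \<le> offspring_mean \<xi> * offspring_mean \<xi> ^ m"
    using Suc mean_pos by (intro mult_left_mono) auto
  finally show ?case by simp
qed

lemma gwq_tendsto: "gwq \<xi> \<longlonglongrightarrow> 0"
proof (rule tendsto_sandwich[of "\<lambda>_. 0" _ _ "\<lambda>m. offspring_mean \<xi> ^ m"])
  show "\<forall>\<^sub>F n in sequentially. 0 \<le> gwq \<xi> n" by (simp add: gwq_range)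
  show "\<forall>\<^sub>F n in sequentially. gwq \<xi> n \<le> offspring_mean \<xi> ^ n" by (simp add: gwq_le_pow)
  show "(\<lambda>m. offspring_mean \<xi> ^ m) \<longlonglongrightarrow> 0"
    using mean_pos mean_lt1 by (intro LIMSEQ_power_zero) auto
qed auto

lemma gwq_pos: "0 < gwq \<xi> m"
proof (induction m)
  case 0 then show ?case by (simp add: gwq_0)
next
  case (Suc m)
  obtain k where k: "k \<in> set_pmf \<xi>" "2 \<le> k" using exists_big by blast
  have q: "0 < gwq \<xi> m" "gwq \<xi> m \<le> 1" using Suc gwq_range by auto
  have "(1 - gwq \<xi> m) ^ k < 1"
  proof -
    have "(1 - gwq \<xi> m) ^ k \<le> (1 - gwq \<xi> m) ^ 1"
      using q k by (intro power_decreasing) auto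
    then show ?thesis using q by simp
  qed
  show ?case unfolding gwq_Suc
    by (rule integral_pmf_pos[OF _ _ k(1)])
       (use q one_minus_pow_bound \<open>(1 - gwq \<xi> m) ^ k < 1\<close> in \<open>auto intro!: bounded_pmf_integrable[where B=1]\<close>)
qed

end



theorem lemma3p1:
  fixes \<xi> :: "nat pmf"
  assumes mean_pos: "0 < offspring_mean \<xi>"
    and mean_lt1: "offspring_mean \<xi> < 1"
    and var_finite: "integrable (measure_pmf \<xi>) (\<lambda>k. (real k)\<^sup>2)"
    and var_pos: "0 < measure_pmf.variance \<xi> real"
    and nondeg: "measure_pmf.prob \<xi> {k. k \<ge> 2} > 0"
  shows "(\<lambda>m. measure_pmf.prob (N_law \<xi> m) {1} / measure_pmf.prob (N_law \<xi> m) {n. n \<ge> 1})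
           \<longlonglongrightarrow> 1"
proof -
  let ?mu = "offspring_mean \<xi>"
  let ?S = "measure_pmf (size_biased \<xi>)"
  let ?q = "gwq \<xi>"
  define C where "C = (\<integral>k. real (k - 1) \<partial>?S)"
  define c where "c m = (\<integral>k. real (k - 1) * (1 - ?q m) ^ (k - 1 - 1) \<partial>?S)" for m
  define P1 where "P1 m = measure_pmf.prob (N_law \<xi> m) {1}" for m
  define P where "P m = measure_pmf.prob (N_law \<xi> m) {n. n \<ge> 1}" for m
  have qr: "0 < ?q m" "?q m \<le> 1" for m
    using gwq_pos[OF mean_pos mean_lt1 nondeg] gwq_range by auto
  have Nb: "N_law \<xi> m = bind_pmf (size_biased \<xi>) (\<lambda>k. binomial_pmf (k - 1) (?q m))" for m
    unfolding N_law_def count_binomial gwq_def ..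
  have intC: "integrable ?S (\<lambda>k. real (k - 1))"
  proof -
    have i1: "integrable (measure_pmf \<xi>) (\<lambda>k. (real k)\<^sup>2 / ?mu)"
      using var_finite by simp
    have ae: "AE x in measure_pmf \<xi>. norm (real x / ?mu * real (x - 1)) \<le> norm ((real x)\<^sup>2 / ?mu)"
    proof (rule AE_I2)
      fix x :: nat
      have "real x * real (x - 1) \<le> real x * real x" by (intro mult_left_mono) auto
      then show "norm (real x / ?mu * real (x - 1)) \<le> norm ((real x)\<^sup>2 / ?mu)"
        using mean_pos by (simp add: power2_eq_square divide_right_mono)
    qed
    have meas: "(\<lambda>x. real x / ?mu * real (x - 1)) \<in> borel_measurable (measure_pmf \<xi>)"
      by simp
    have "integrable (measure_pmf \<xi>) (\<lambda>x. real x / ?mu * real (x - 1))"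
      by (rule Bochner_Integration.integrable_bound[OF i1 meas ae])
    then show ?thesis using integrable_size_biased[OF mean_pos] by simp
  qed
  have intc: "integrable ?S (\<lambda>k. real (k - 1) * (1 - ?q m) ^ (k - 1 - 1))" for m
    by (rule Bochner_Integration.integrable_bound[OF intC]) (use qr gwq_range in \<open>auto intro!: AE_I2 mult_left_le power_le_one\<close>)
  have P1_eq: "P1 m = ?q m * c m" for m
  proof -
    have "P1 m = (\<integral>k. ?q m * (real (k - 1) * (1 - ?q m) ^ (k - 1 - 1)) \<partial>?S)"
      unfolding P1_def measure_pmf_single Nb pmf_bind
      using qr[of m] by (intro Bochner_Integration.integral_cong refl) auto
    then show ?thesis unfolding c_def by simp
  qed
  have P_le: "P m \<le> ?q m * C" for m
  proof -
    have "P m = 1 - pmf (N_law \<xi> m) 0"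
    proof -
      have "{n::nat. n \<ge> 1} = UNIV - {0}" by auto
      then show ?thesis unfolding P_def
        using measure_pmf.prob_compl[where A="{0::nat}" and M="N_law \<xi> m"] by (simp add: measure_pmf_single)
    qed
    also have "pmf (N_law \<xi> m) 0 = (\<integral>k. (1 - ?q m) ^ (k - 1) \<partial>?S)"
      unfolding Nb pmf_bind using qr[of m] by (intro Bochner_Integration.integral_cong refl) auto
    also have "1 - (\<integral>k. (1 - ?q m) ^ (k - 1) \<partial>?S) = (\<integral>k. 1 - (1 - ?q m) ^ (k - 1) \<partial>?S)"
      using qr[of m]
      by (subst Bochner_Integration.integral_diff)
         (auto intro!: bounded_pmf_integrable[where B=1] power_le_one)
    also have "\<dots> \<le> (\<integral>k. ?q m * real (k - 1) \<partial>?S)"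
      by (rule integral_mono)
         (use qr[of m] one_minus_pow_bound intC in \<open>auto intro!: bounded_pmf_integrable[where B=1] simp: mult.commute\<close>)
    also have "\<dots> = ?q m * C" unfolding C_def by simp
    finally show ?thesis .
  qed
  have P1_le: "P1 m \<le> P m" for m
    unfolding P1_def P_def by (rule measure_pmf.finite_measure_mono) auto
  have c_lim: "c \<longlonglongrightarrow> C"
    unfolding c_def C_def
  proof (rule integral_dominated_convergence[where w="\<lambda>k. real (k - 1)"])
    show "integrable ?S (\<lambda>k. real (k - 1))" by (rule intC)
    show "AE x in ?S. (\<lambda>m. real (x - 1) * (1 - ?q m) ^ (x - 1 - 1)) \<longlonglongrightarrow> real (x - 1)"
    proof (rule AE_I2)
      fix x :: nat
      have "(\<lambda>m. real (x - 1) * (1 - ?q m) ^ (x - 1 - 1)) \<longlonglongrightarrow> real (x - 1) * (1 - 0) ^ (x - 1 - 1)"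
        by (intro tendsto_intros gwq_tendsto[OF mean_pos mean_lt1 nondeg])
      then show "(\<lambda>m. real (x - 1) * (1 - ?q m) ^ (x - 1 - 1)) \<longlonglongrightarrow> real (x - 1)" by simp
    qed
    show "AE x in ?S. norm (real (x - 1) * (1 - ?q m) ^ (x - 1 - 1)) \<le> real (x - 1)" for m
      using qr[of m] by (auto intro!: AE_I2 mult_left_le power_le_one)
  qed auto
  have C_pos: "0 < C"
  proof -
    obtain k where k: "k \<in> set_pmf \<xi>" "2 \<le> k" using exists_big[OF mean_pos mean_lt1 nondeg] by blast
    have kS: "k \<in> set_pmf (size_biased \<xi>)"
      using k mean_pos by (simp add: set_pmf_eq pmf_size_biased)
    show ?thesis unfolding C_def
      by (rule integral_pmf_pos[OF _ intC kS]) (use k in auto)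
  qed
  have lim1: "(\<lambda>m. c m / C) \<longlonglongrightarrow> 1"
    using tendsto_divide[OF c_lim tendsto_const[of C]] C_pos by simp
  have ev: "eventually (\<lambda>m. 0 < c m) sequentially"
    using order_tendstoD(1)[OF c_lim C_pos] .
  show ?thesis
    unfolding P1_def[symmetric] P_def[symmetric]
  proof (rule tendsto_sandwich[OF _ _ lim1 tendsto_const])
    show "eventually (\<lambda>m. c m / C \<le> P1 m / P m) sequentially"
      using ev
    proof eventually_elim
      case (elim m)
      have p1: "0 < P1 m" using P1_eq[of m] qr[of m] elim by simp
      have pp: "0 < P m" using p1 P1_le[of m] by simp
      have "c m / C = P1 m / (?q m * C)" using P1_eq[of m] qr[of m] by simp
      also have "\<dots> \<le> P1 m / P m"
        using p1 pp P_le[of m] by (intro divide_left_mono) auto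
      finally show ?case .
    qed
    show "eventually (\<lambda>m. P1 m / P m \<le> 1) sequentially"
      using ev
    proof eventually_elim
      case (elim m)
      have p1: "0 < P1 m" using P1_eq[of m] qr[of m] elim by simp
      then show ?case using P1_le[of m] by simp
    qed
  qed
qed


end
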